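(* Let $N\ge 2$ and let $\gamma_k$ ($k=1,\dots,N-1$) be as defined below. Then as $\lambda\to+\infty$, $$R_1=\sum_{k=1}^{N-1}\frac{k_{k+1}^2-k_k^2}{4\lambda^2}\Big(1+\mathcal{O}\big(\lambda^{-2}\big)\Big)\exp(-\gamma_k\lambda),$$ meaning that there are functions $\epsilon_k(\lambda)=\mathcal{O}(\lambda^{-2})$ as $\lambda\to+\infty$ such that $R_1=\sum_{k=1}^{N-1}\frac{k_{k+1}^2-k_k^2}{4\lambda^2}(1+\epsilon_k(\lambda))\exp(-\gamma_k\lambda)$ for all sufficiently large $\lambda$.
   Context: Fix real constants $\omega>0$, $\mu>0$, an integer $N\ge 2$, conductivities $\sigma_1,\dots,\sigma_N>0$ and thicknesses $h_1,\dots,h_{N-1}>0$. For $j=1,\dots,N$ let $k_j$ be a complex number with $k_j^2=-i\omega\mu\sigma_j$, and set $k_0:=0$. For real $\lambda>0$ define $u_0(\lambda)=\lambda$ and $u_j(\lambda)=\sqrt{\lambda^2-k_j^2}=\sqrt{\lambda^2+i\omega\mu\sigma_j}$ (principal square root), $j=1,\dots,N$. Define $\Psi_j=\dfrac{u_{j-1}-u_j}{u_{j-1}+u_j}$ for $j=1,\dots,N$, and the reflection terms recursively by $R_N=0$, $$R_j=\frac{R_{j+1}+\Psi_{j+1}}{R_{j+1}\Psi_{j+1}+1}\,e^{-2u_jh_j},\quad j=N-1,\dots,1,\qquad R_0=\frac{R_1+\Psi_1}{R_1\Psi_1+1}.$$ Put $c_i=2h_i\sqrt{1+i\omega\mu\sigma_i/\lambda^2}$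 (principal square root) for $i=1,\dots,N-1$, and $\gamma_k=\sum_{i=1}^k c_i$ for $k=1,\dots,N-1$. *)

theory Defs
  imports "HOL-Analysis.Analysis" "HOL-Library.Landau_Symbols"
begin

definition ksq :: "real \<Rightarrow> real \<Rightarrow> (nat \<Rightarrow> real) \<Rightarrow> nat \<Rightarrow> complex" where
  "ksq \<omega> \<mu> \<sigma> j = (if j = 0 then 0 else - \<i> * of_real (\<omega> * \<mu> * \<sigma> j))"

definition uu :: "real \<Rightarrow> real \<Rightarrow> (nat \<Rightarrow> real) \<Rightarrow> nat \<Rightarrow> real \<Rightarrow> complex" where
  "uu \<omega> \<mu> \<sigma> j lam = (if j = 0 then of_real lam
      else csqrt (of_real (lam^2) + \<i> * of_real (\<omega> * \<mu> * \<sigma> j)))"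

definition Psi :: "real \<Rightarrow> real \<Rightarrow> (nat \<Rightarrow> real) \<Rightarrow> nat \<Rightarrow> real \<Rightarrow> complex" where
  "Psi \<omega> \<mu> \<sigma> j lam =
     (uu \<omega> \<mu> \<sigma> (j - 1) lam - uu \<omega> \<mu> \<sigma> j lam) / (uu \<omega> \<mu> \<sigma> (j - 1) lam + uu \<omega> \<mu> \<sigma> j lam)"

text \<open>Rtail N m = R_{N-m}, computed by the backward recursion from R_N = 0
  (used for m <= N - 1, i.e. indices j = N, ..., 1).\<close>
fun Rtail :: "real \<Rightarrow> real \<Rightarrow> (nat \<Rightarrow> real) \<Rightarrow> (nat \<Rightarrow> real) \<Rightarrow> nat \<Rightarrow> nat \<Rightarrow> real \<Rightarrow> complex" where
  "Rtail \<omega> \<mu> \<sigma> h N 0 lam = 0"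
| "Rtail \<omega> \<mu> \<sigma> h N (Suc m) lam =
     (let r = Rtail \<omega> \<mu> \<sigma> h N m lam; p = Psi \<omega> \<mu> \<sigma> (N - m) lam; j = N - m - 1 in
      (r + p) / (r * p + 1) * exp (- 2 * uu \<omega> \<mu> \<sigma> j lam * of_real (h j)))"

definition Rref :: "real \<Rightarrow> real \<Rightarrow> (nat \<Rightarrow> real) \<Rightarrow> (nat \<Rightarrow> real) \<Rightarrow> nat \<Rightarrow> nat \<Rightarrow> real \<Rightarrow> complex" where
  "Rref \<omega> \<mu> \<sigma> h N j lam = Rtail \<omega> \<mu> \<sigma> h N (N - j) lam"

definition cc :: "real \<Rightarrow> real \<Rightarrow> (nat \<Rightarrow> real) \<Rightarrow> (nat \<Rightarrow> real) \<Rightarrow> nat \<Rightarrow> real \<Rightarrow> complex" where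
  "cc \<omega> \<mu> \<sigma> h i lam = 2 * of_real (h i) * csqrt (1 + \<i> * of_real (\<omega> * \<mu> * \<sigma> i / lam^2))"

definition gam :: "real \<Rightarrow> real \<Rightarrow> (nat \<Rightarrow> real) \<Rightarrow> (nat \<Rightarrow> real) \<Rightarrow> nat \<Rightarrow> real \<Rightarrow> complex" where
  "gam \<omega> \<mu> \<sigma> h k lam = (\<Sum>i=1..k. cc \<omega> \<mu> \<sigma> h i lam)"

end

theory Submission imports Defs begin

lemma u_facts:
  fixes lam a :: real
  assumes lam: "lam > 0" and a: "a \<ge> 0"
  defines "u \<equiv> csqrt (of_real (lam^2) + \<i> * of_real a)"
  shows "Re u \<ge> lam" "u^2 = of_real (lam^2) + \<i> * of_real a"
    "norm (u - of_real lam) \<le> a / (2*lam)"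
proof -
  show sq: "u^2 = of_real (lam^2) + \<i> * of_real a" unfolding u_def by simp
  have "Re (u^2) = lam^2" using sq by simp
  hence "(Re u)^2 = lam^2 + (Im u)^2" by (simp add: power2_eq_square)
  hence "lam^2 \<le> (Re u)^2" by simp
  moreover have "Re u \<ge> 0" unfolding u_def by (rule Re_csqrt)
  ultimately show re: "Re u \<ge> lam" using power2_le_imp_le by blast
  have e: "(u - of_real lam) * (u + of_real lam) = \<i> * of_real a"
    using sq by (simp add: algebra_simps power2_eq_square)
  have "2*lam \<le> Re (u + of_real lam)" using re by simp
  also have "\<dots> \<le> norm (u + of_real lam)" by (rule complex_Re_le_cmod)
  finally have n2: "2*lam \<le> norm (u + of_real lam)" .
  have "norm (u - of_real lam) * norm (u + of_real lam) = a"
    using e a by (metis norm_mult norm_ii mult_1 norm_of_real abs_of_nonneg)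
  then show "norm (u - of_real lam) \<le> a / (2*lam)"
    using n2 lam by (smt (verit, best) divide_right_mono le_divide_eq_1_pos mult_le_cancel_left norm_ge_zero nonzero_mult_div_cancel_right)
qed

lemma csqrt_scale:
  fixes lam a :: real
  assumes lam: "lam > 0"
  shows "csqrt (of_real (lam^2) + \<i> * of_real a) = of_real lam * csqrt (1 + \<i> * of_real (a / lam^2))"
proof (rule csqrt_unique)
  have "(of_real lam * csqrt (1 + \<i> * of_real (a / lam^2)))^2 = of_real (lam^2) * (1 + \<i> * of_real (a / lam^2))"
    by (simp add: power_mult_distrib)
  also have "\<dots> = of_real (lam^2) + \<i> * of_real (lam^2 * (a / lam^2))"
    by (simp add: algebra_simps)
  also have "lam^2 * (a / lam^2) = a" using lam by simp
  finally show "(of_real lam * csqrt (1 + \<i> * of_real (a / lam^2)))^2 = of_real (lam^2) + \<i> * of_real a" .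
  show "0 < Re (of_real lam * csqrt (1 + \<i> * complex_of_real (a / lam\<^sup>2))) \<or>
    Re (of_real lam * csqrt (1 + \<i> * complex_of_real (a / lam\<^sup>2))) = 0 \<and>
    0 \<le> Im (of_real lam * csqrt (1 + \<i> * complex_of_real (a / lam\<^sup>2)))"
    using csqrt_principal[of "1 + \<i> * complex_of_real (a / lam\<^sup>2)"] lam
    by auto
qed


definition small :: "(real \<Rightarrow> complex) \<Rightarrow> bool" where
  "small f \<longleftrightarrow> (\<exists>C. eventually (\<lambda>x. norm (f x) \<le> C / x^2) at_top)"

lemma smallI: "eventually (\<lambda>x. norm (f x) \<le> C / x^2) at_top \<Longrightarrow> small f"
  unfolding small_def by blast

lemma small_cong: "eventually (\<lambda>x. f x = g x) at_top \<Longrightarrow> small g \<Longrightarrow> small f"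
proof -
  assume e: "eventually (\<lambda>x. f x = g x) at_top" and "small g"
  then obtain C where C: "eventually (\<lambda>x. norm (g x) \<le> C / x^2) at_top" unfolding small_def by blast
  from e C have "eventually (\<lambda>x. norm (f x) \<le> C / x^2) at_top" by eventually_elim simp
  then show ?thesis by (rule smallI)
qed

lemma small_add: "small f \<Longrightarrow> small g \<Longrightarrow> small (\<lambda>x. f x + g x)"
proof -
  assume "small f" "small g"
  then obtain C D where C: "eventually (\<lambda>x. norm (f x) \<le> C / x^2) at_top"
    and D: "eventually (\<lambda>x. norm (g x) \<le> D / x^2) at_top" unfolding small_def by blast
  have "eventually (\<lambda>x. norm (f x + g x) \<le> (C + D) / x^2) at_top"
    using C D
  proof eventually_elim
    case (elim x)
    then show ?case by (smt (verit) add_divide_distrib norm_triangle_ineq)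
  qed
  then show ?thesis by (rule smallI)
qed

lemma small_mult: "small f \<Longrightarrow> small g \<Longrightarrow> small (\<lambda>x. f x * g x)"
proof -
  assume "small f" "small g"
  then obtain C D where C: "eventually (\<lambda>x. norm (f x) \<le> C / x^2) at_top"
    and D: "eventually (\<lambda>x. norm (g x) \<le> D / x^2) at_top" unfolding small_def by blast
  have "eventually (\<lambda>x. norm (f x * g x) \<le> (C * D) / x^2) at_top"
    using C D eventually_ge_at_top[of "1::real"]
  proof eventually_elim
    case (elim x)
    have x2: "x^2 \<ge> 1" using elim(3) by (simp add: one_le_power)
    have c0: "C / x^2 \<ge> 0" using elim(1) norm_ge_zero order_trans by blast
    have d0: "D / x^2 \<ge> 0" using elim(2) norm_ge_zero order_trans by blast
    have "norm (f x * g x) \<le> (C / x^2) * (D / x^2)"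
      unfolding norm_mult using elim c0 by (intro mult_mono) auto
    also have "\<dots> \<le> (C / x^2) * D"
    proof (intro mult_left_mono)
      have "D \<ge> 0" using d0 x2 elim(3) by (auto simp add: zero_le_divide_iff)
      then show "D / x^2 \<le> D" using x2 by (simp add: divide_le_eq mult_le_cancel_left1)
    qed (use c0 in auto)
    finally show ?case by simp
  qed
  then show ?thesis by (rule smallI)
qed

lemma small_prod1:
  assumes "small (\<lambda>x. f x - 1)" "small (\<lambda>x. g x - 1)"
  shows "small (\<lambda>x. f x * g x - 1)"
proof -
  have "small (\<lambda>x. (f x - 1) * (g x - 1) + ((f x - 1) + (g x - 1)))"
    using assms by (intro small_add small_mult)
  then show ?thesis by (rule small_cong[rotated]) (auto simp: algebra_simps)
qed

lemma small_prod_set: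
  assumes "finite A" "\<And>i. i \<in> A \<Longrightarrow> small (\<lambda>x. f i x - 1)"
  shows "small (\<lambda>x. (\<Prod>i\<in>A. f i x) - 1)"
  using assms
proof (induction A rule: finite_induct)
  case empty
  show ?case by (rule smallI[of _ 0]) simp
next
  case (insert a A)
  have "small (\<lambda>x. f a x * (\<Prod>i\<in>A. f i x) - 1)"
    using insert by (intro small_prod1) auto
  then show ?case using insert by simp
qed

lemma small_bigo:
  assumes "small f"
  shows "(\<lambda>x. norm (f x)) \<in> O[at_top](\<lambda>x. 1 / x^2)"
proof -
  obtain C where C: "eventually (\<lambda>x. norm (f x) \<le> C / x^2) at_top" using assms unfolding small_def by blast
  have "eventually (\<lambda>x. norm (norm (f x)) \<le> C * norm (1 / x^2)) at_top"
    using C by eventually_elim (simp add: divide_inverse)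
  then show ?thesis by (rule bigoI)
qed


lemma decomp:
  fixes R P E D :: "nat \<Rightarrow> complex"
  assumes RN: "R N = 0"
    and rec: "\<And>j. 1 \<le> j \<Longrightarrow> j < N \<Longrightarrow> R j = (P (Suc j) + R (Suc j) * D j) * E j"
  shows "1 \<le> j \<Longrightarrow> j \<le> N \<Longrightarrow>
    R j = (\<Sum>k=j..N-1. P (Suc k) * (\<Prod>i=j..k. E i) * (\<Prod>i=j..<k. D i))"
proof (induction "N - j" arbitrary: j)
  case 0
  then have "j = N" by simp
  then show ?case using RN 0 by simp
next
  case (Suc d)
  then have jN: "j < N" by simp
  have IH: "R (Suc j) = (\<Sum>k=Suc j..N-1. P (Suc k) * (\<Prod>i=Suc j..k. E i) * (\<Prod>i=Suc j..<k. D i))"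
    using Suc jN by (intro Suc.hyps) auto
  have "(\<Sum>k=j..N-1. P (Suc k) * (\<Prod>i=j..k. E i) * (\<Prod>i=j..<k. D i))
      = P (Suc j) * E j + (\<Sum>k=Suc j..N-1. P (Suc k) * (\<Prod>i=j..k. E i) * (\<Prod>i=j..<k. D i))"
    using jN by (subst sum.atLeast_Suc_atMost) auto
  also have "(\<Sum>k=Suc j..N-1. P (Suc k) * (\<Prod>i=j..k. E i) * (\<Prod>i=j..<k. D i))
      = (\<Sum>k=Suc j..N-1. D j * E j * (P (Suc k) * (\<Prod>i=Suc j..k. E i) * (\<Prod>i=Suc j..<k. D i)))"
  proof (rule sum.cong)
    fix k assume k: "k \<in> {Suc j..N-1}"
    have "(\<Prod>i=j..k. E i) = E j * (\<Prod>i=Suc j..k. E i)" using k by (subst prod.atLeast_Suc_atMost) auto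
    moreover have "(\<Prod>i=j..<k. D i) = D j * (\<Prod>i=Suc j..<k. D i)" using k by (subst prod.atLeast_Suc_lessThan) auto
    ultimately show "P (Suc k) * (\<Prod>i=j..k. E i) * (\<Prod>i=j..<k. D i) = D j * E j * (P (Suc k) * (\<Prod>i=Suc j..k. E i) * (\<Prod>i=Suc j..<k. D i))"
      by (simp add: algebra_simps)
  qed simp
  also have "\<dots> = D j * E j * R (Suc j)" by (simp add: IH sum_distrib_left)
  finally show ?case using rec[of j] jN Suc.prems by (simp add: algebra_simps)
qed


lemma pair_facts:
  fixes lam a b :: real
  assumes lam: "lam > 0" and a: "a \<ge> 0" and b: "b \<ge> 0"
  defines "u \<equiv> csqrt (of_real (lam^2) + \<i> * of_real a)"
    and "v \<equiv> csqrt (of_real (lam^2) + \<i> * of_real b)"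
  shows "norm (u + v) \<ge> 2*lam"
    "(u - v) / (u + v) = (\<i> * of_real a - \<i> * of_real b) / (u + v)^2"
    "norm (4 * of_real (lam^2) / (u + v)^2 - 1) \<le> (a + b) / (2 * lam^2)"
proof -
  note fu = u_facts[OF lam a, folded u_def]
  note fv = u_facts[OF lam b, folded v_def]
  have "2*lam \<le> Re (u + v)" using fu(1) fv(1) by simp
  also have "\<dots> \<le> norm (u + v)" by (rule complex_Re_le_cmod)
  finally show ns: "norm (u + v) \<ge> 2*lam" .
  hence s0: "u + v \<noteq> 0" using lam by auto
  have "(u - v) * (u + v) = u^2 - v^2" by (simp add: algebra_simps power2_eq_square)
  also have "\<dots> = \<i> * of_real a - \<i> * of_real b" using fu(2) fv(2) by simp
  finally have e: "(u - v) * (u + v) = \<i> * of_real a - \<i> * of_real b" .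
  show "(u - v) / (u + v) = (\<i> * of_real a - \<i> * of_real b) / (u + v)^2"
    using s0 by (simp add: e[symmetric] power2_eq_square)
  define s where "s = u + v"
  have d1: "norm (2 * of_real lam - s) \<le> (a + b) / (2*lam)"
  proof -
    have "norm (2 * of_real lam - s) = norm ((of_real lam - u) + (of_real lam - v))" unfolding s_def
      by (simp add: algebra_simps)
    also have "\<dots> \<le> norm (u - of_real lam) + norm (v - of_real lam)"
      by (metis norm_minus_commute norm_triangle_ineq)
    also have "\<dots> \<le> a / (2*lam) + b / (2*lam)" using fu(3) fv(3) by simp
    finally show ?thesis by (simp add: add_divide_distrib)
  qed
  have d2: "norm (2 * of_real lam + s) \<le> 2 * norm s"
  proof -
    have "norm (2 * of_real lam + s) \<le> norm (2 * complex_of_real lam) + norm s" by (rule norm_triangle_ineq)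
    also have "norm (2 * complex_of_real lam) = 2 * lam" using lam by (simp add: norm_mult)
    finally show ?thesis using ns unfolding s_def by simp
  qed
  have ns': "norm s \<ge> 2*lam" using ns s_def by simp
  have "4 * of_real (lam^2) / s^2 - 1 = (2 * of_real lam - s) * (2 * of_real lam + s) / s^2"
  proof -
    have s2: "s^2 \<noteq> 0" using s0 s_def by simp
    have "(2 * of_real lam - s) * (2 * of_real lam + s) = 4 * of_real (lam^2) - s^2"
      by (simp add: algebra_simps power2_eq_square)
    then show ?thesis using s2 by (simp add: diff_divide_distrib)
  qed
  hence "norm (4 * of_real (lam^2) / s^2 - 1) = norm (2 * of_real lam - s) * (norm (2 * of_real lam + s) / norm s) / norm s"
    by (simp only: norm_mult norm_divide norm_power power2_eq_square) (simp add: field_simps)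
  also have "\<dots> \<le> ((a + b) / (2*lam)) * 2 / (2*lam)"
  proof -
    have q: "norm (2 * of_real lam + s) / norm s \<le> 2" using d2 ns' lam by (simp add: divide_le_eq)
    have "norm (2 * of_real lam - s) * (norm (2 * of_real lam + s) / norm s) \<le> ((a + b) / (2*lam)) * 2"
      using d1 q a b lam by (intro mult_mono) auto
    moreover have "(0::real) \<le> ((a + b) / (2*lam)) * 2" using a b lam by simp
    ultimately have "norm (2 * of_real lam - s) * (norm (2 * of_real lam + s) / norm s) / norm s \<le> ((a + b) / (2*lam)) * 2 / norm s"
      using ns' lam by (intro divide_right_mono) auto
    also have "\<dots> \<le> ((a + b) / (2*lam)) * 2 / (2*lam)"
      using ns' lam a b by (intro divide_left_mono) (auto intro!: mult_pos_pos)
    finally show ?thesis .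
  qed
  also have "\<dots> = (a + b) / (2 * lam^2)" using lam by (simp add: field_simps power2_eq_square)
  finally show "norm (4 * of_real (lam^2) / (u + v)^2 - 1) \<le> (a + b) / (2 * lam^2)" unfolding s_def .
qed


lemma den_bound:
  fixes r p :: complex
  assumes "norm r \<le> 1" "norm p \<le> 1/2"
  shows "norm (r * p + 1) \<ge> 1/2"
proof -
  have "norm r * norm p \<le> 1 * (1/2)" using assms by (intro mult_mono) auto
  hence "norm (r * p) \<le> 1/2" by (simp add: norm_mult)
  moreover have "1 \<le> norm (r * p + 1) + norm (r * p)"
    using norm_triangle_ineq4[of "r*p + 1" "r*p"] by simp
  ultimately show ?thesis by linarith
qed

lemma dl_bound:
  fixes r p :: complex
  assumes "norm r \<le> 1" "norm p \<le> 1/2"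
  shows "norm ((1 - p^2) / (r * p + 1) - 1) \<le> 3 * norm p"
proof -
  have d: "norm (r * p + 1) \<ge> 1/2" by (rule den_bound[OF assms])
  hence d0: "r * p + 1 \<noteq> 0" by auto
  have "(1 - p^2) / (r * p + 1) - 1 = - (p^2 + r * p) / (r * p + 1)"
    using d0 by (simp add: field_simps)
  hence "norm ((1 - p^2) / (r * p + 1) - 1) = norm (p^2 + r * p) / norm (r * p + 1)"
    by (simp only: norm_divide norm_minus_cancel)
  also have "\<dots> \<le> (3/2 * norm p) / (1/2)"
  proof (rule frac_le)
    have "norm (p^2 + r * p) \<le> norm p * norm p + norm r * norm p"
    proof -
      have "norm (p^2 + r * p) \<le> norm (p^2) + norm (r * p)" by (rule norm_triangle_ineq)
      then show ?thesis by (simp add: norm_mult norm_power power2_eq_square)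
    qed
    also have "\<dots> \<le> 1/2 * norm p + 1 * norm p"
      using assms by (intro add_mono mult_right_mono) auto
    finally show "norm (p^2 + r * p) \<le> 3/2 * norm p" by simp
  qed (use d in auto)
  finally show ?thesis by simp
qed

lemma step_bound:
  fixes r p e :: complex
  assumes "norm r \<le> 1" "norm p \<le> 1/2" "norm e \<le> 1/3"
  shows "norm ((r + p) / (r * p + 1) * e) \<le> 1"
proof -
  have d: "norm (r * p + 1) \<ge> 1/2" by (rule den_bound[OF assms(1,2)])
  have n: "norm (r + p) \<le> 3/2" using assms norm_triangle_ineq[of r p] by linarith
  have "norm ((r + p) / (r * p + 1)) \<le> (3/2) / (1/2)"
    unfolding norm_divide using d n by (intro frac_le) auto
  hence "norm ((r + p) / (r * p + 1)) \<le> 3" by simp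
  hence "norm ((r + p) / (r * p + 1)) * norm e \<le> 3 * (1/3)"
    using assms(3) by (intro mult_mono) auto
  then show ?thesis by (simp only: norm_mult)
qed


theorem lemma3:
  fixes \<omega> \<mu> :: real and N :: nat and \<sigma> h :: "nat \<Rightarrow> real"
  assumes "\<omega> > 0" "\<mu> > 0" "N \<ge> 2"
    and "\<And>j. 1 \<le> j \<Longrightarrow> j \<le> N \<Longrightarrow> \<sigma> j > 0"
    and "\<And>i. 1 \<le> i \<Longrightarrow> i \<le> N - 1 \<Longrightarrow> h i > 0"
  shows "\<exists>\<epsilon> :: nat \<Rightarrow> real \<Rightarrow> complex.
     (\<forall>k\<in>{1..N-1}. (\<lambda>x. norm (\<epsilon> k x)) \<in> O[at_top](\<lambda>x. 1 / x^2)) \<and>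
     (\<forall>\<^sub>F lam in at_top.
        Rref \<omega> \<mu> \<sigma> h N 1 lam =
        (\<Sum>k=1..N-1. (ksq \<omega> \<mu> \<sigma> (k+1) - ksq \<omega> \<mu> \<sigma> k) / (4 * of_real (lam^2))
           * (1 + \<epsilon> k lam) * exp (- gam \<omega> \<mu> \<sigma> h k lam * of_real lam)))"
proof -
  define a where "a j = \<omega> * \<mu> * \<sigma> j" for j
  define u where "u j lam = uu \<omega> \<mu> \<sigma> j lam" for j lam
  define R where "R j lam = Rref \<omega> \<mu> \<sigma> h N j lam" for j lam
  define Ps where "Ps j lam = Psi \<omega> \<mu> \<sigma> j lam" for j lam
  define E where "E j lam = exp (- 2 * u j lam * of_real (h j))" for j lam
  define Dl where "Dl j lam = (1 - (Ps (Suc j) lam)^2) / (R (Suc j) lam * Ps (Suc j) lam + 1)" for j lam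
  define Del where "Del k = ksq \<omega> \<mu> \<sigma> (k+1) - ksq \<omega> \<mu> \<sigma> k" for k
  define P where "P k lam = (\<Prod>i=1..<k. Dl i lam)" for k lam
  define eps where "eps k lam = 4 * of_real (lam^2) / (u k lam + u (Suc k) lam)^2 * P k lam - 1" for k lam
  have a_pos: "a j > 0" if "1 \<le> j" "j \<le> N" for j
    unfolding a_def using assms(1,2) assms(4)[OF that] by simp
  have u_eq: "u j lam = csqrt (of_real (lam^2) + \<i> * of_real (a j))" if "1 \<le> j" for j lam
    unfolding u_def uu_def a_def using that by simp
  have Del_eq: "Del k = \<i> * of_real (a k) - \<i> * of_real (a (Suc k))" if "1 \<le> k" for k
    unfolding Del_def ksq_def a_def using that by simp
  have pf: "norm (u k lam + u (Suc k) lam) \<ge> 2*lam"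
      "Ps (Suc k) lam = Del k / (u k lam + u (Suc k) lam)^2"
      "norm (4 * of_real (lam^2) / (u k lam + u (Suc k) lam)^2 - 1) \<le> (a k + a (Suc k)) / (2 * lam^2)"
    if k: "k \<in> {1..N-1}" and lam: "lam > 0" for k lam
  proof -
    have ak: "a k \<ge> 0" "a (Suc k) \<ge> 0" using a_pos k by (auto intro: less_imp_le)
    have k1: "1 \<le> k" using k by simp
    have us: "u (Suc k) lam = csqrt (of_real (lam^2) + \<i> * of_real (a (Suc k)))" by (rule u_eq) simp
    note q = pair_facts[OF lam ak, folded u_eq[OF k1, of lam] us]
    show "norm (u k lam + u (Suc k) lam) \<ge> 2*lam" using q(1) by simp
    show "norm (4 * of_real (lam^2) / (u k lam + u (Suc k) lam)^2 - 1) \<le> (a k + a (Suc k)) / (2 * lam^2)"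
      using q(3) by simp
    have "Ps (Suc k) lam = (u k lam - u (Suc k) lam) / (u k lam + u (Suc k) lam)"
      unfolding Ps_def Psi_def u_def by simp
    also have "\<dots> = Del k / (u k lam + u (Suc k) lam)^2"
      using q(2) k1 by (simp add: Del_eq)
    finally show "Ps (Suc k) lam = Del k / (u k lam + u (Suc k) lam)^2" .
  qed
  have psi_bound: "norm (Ps (Suc k) lam) \<le> norm (Del k) / (4 * lam^2)"
    if k: "k \<in> {1..N-1}" and lam: "lam > 0" for k lam
  proof -
    have n: "norm (u k lam + u (Suc k) lam) \<ge> 2*lam" by (rule pf(1)[OF k lam])
    have "(2*lam)^2 \<le> norm (u k lam + u (Suc k) lam) ^2"
      using n lam by (intro power_mono) auto
    hence "4 * lam^2 \<le> norm ((u k lam + u (Suc k) lam)^2)" by (simp add: norm_power power_mult_distrib)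
    moreover have "0 < 4 * lam^2" using lam by simp
    ultimately show ?thesis unfolding pf(2)[OF k lam] norm_divide
      by (intro divide_left_mono) (auto intro!: mult_pos_pos)
  qed
  have E_bound: "norm (E k lam) \<le> exp (- 2 * h k * lam)"
    if k: "k \<in> {1..N-1}" and lam: "lam > 0" for k lam
  proof -
    have hk: "h k > 0" using assms(5) k by auto
    have k1: "1 \<le> k" "k \<le> N" using k by auto
    have "Re (u k lam) \<ge> lam" unfolding u_eq[OF k1(1)]
      by (rule u_facts(1)[OF lam]) (use a_pos[OF k1] in simp)
    hence "- 2 * h k * Re (u k lam) \<le> - 2 * h k * lam" using hk by simp
    then show ?thesis unfolding E_def norm_exp_eq_Re by (simp add: mult.commute)
  qed
  have recR: "R j lam = (R (Suc j) lam + Ps (Suc j) lam) / (R (Suc j) lam * Ps (Suc j) lam + 1) * E j lam"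
    if "1 \<le> j" "j < N" for j lam
  proof -
    have e: "N - j = Suc (N - Suc j)" using that by simp
    have e2: "N - (N - Suc j) = Suc j" using that by simp
    show ?thesis unfolding R_def Rref_def e Ps_def E_def u_def
      by (simp add: Let_def e2 Rref_def[symmetric])
  qed
  have RN: "R N lam = 0" for lam unfolding R_def Rref_def by simp
  define G where "G lam \<longleftrightarrow> lam \<ge> 1 \<and> (\<forall>k\<in>{1..N-1}. norm (Ps (Suc k) lam) \<le> 1/2 \<and> norm (E k lam) \<le> 1/3)" for lam
  have evk: "eventually (\<lambda>lam. norm (Ps (Suc k) lam) \<le> 1/2 \<and> norm (E k lam) \<le> 1/3) at_top"
    if k: "k \<in> {1..N-1}" for k
  proof -
    have hk: "h k > 0" using assms(5) k by auto
    show ?thesis using eventually_ge_at_top[of "norm (Del k) + 1 + 1 / h k"]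
    proof eventually_elim
      case (elim lam)
      have l1: "lam \<ge> 1" using elim hk by (smt (verit) norm_ge_zero divide_pos_pos)
      hence lam: "lam > 0" by simp
      have "norm (Del k) \<le> lam" using elim hk by (smt (verit) divide_pos_pos)
      also have "\<dots> \<le> lam^2" using l1 by (simp add: power2_eq_square)
      finally have dl: "norm (Del k) \<le> lam^2" .
      have "norm (Ps (Suc k) lam) \<le> norm (Del k) / (4 * lam^2)" by (rule psi_bound[OF k lam])
      also have "\<dots> \<le> lam^2 / (4 * lam^2)" using dl lam by (intro divide_right_mono) auto
      also have "\<dots> = 1/4" using lam by simp
      finally have p: "norm (Ps (Suc k) lam) \<le> 1/2" by simp
      have hl: "h k * lam \<ge> 1"
      proof -
        have "lam \<ge> 1 / h k" using elim by (smt (verit) norm_ge_zero)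
        then show ?thesis using hk by (simp add: divide_le_eq mult.commute)
      qed
      have "norm (E k lam) \<le> exp (- 2 * h k * lam)" by (rule E_bound[OF k lam])
      also have "\<dots> \<le> exp (-2)" using hl by simp
      also have "\<dots> = inverse (exp 2)" by (simp add: exp_minus)
      also have "\<dots> \<le> 1/3"
      proof -
        have "1 + 2 \<le> exp (2::real)" by (rule exp_ge_add_one_self)
        then show ?thesis by (simp add: inverse_eq_divide divide_le_eq)
      qed
      finally show ?case using p by simp
    qed
  qed
  have evG: "eventually G at_top"
  proof -
    have "eventually (\<lambda>lam. \<forall>k\<in>{1..N-1}. norm (Ps (Suc k) lam) \<le> 1/2 \<and> norm (E k lam) \<le> 1/3) at_top"
      using evk by (intro eventually_ball_finite) auto
    then show ?thesis using eventually_ge_at_top[of "1::real"] unfolding G_def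
      by eventually_elim auto
  qed
  have Rb: "norm (R j lam) \<le> 1" if G: "G lam" and j: "1 \<le> j" "j \<le> N" for j lam
    using j
  proof (induction "N - j" arbitrary: j)
    case 0
    then have "j = N" by simp
    then show ?case by (simp add: RN)
  next
    case (Suc d)
    then have jN: "j < N" by simp
    have IH: "norm (R (Suc j) lam) \<le> 1" using Suc jN by (intro Suc.hyps) auto
    have kk: "j \<in> {1..N-1}" using Suc jN by auto
    show ?case unfolding recR[OF Suc.prems(1) jN]
      using IH G kk unfolding G_def by (intro step_bound) auto
  qed
  have Dl_b: "norm (Dl i lam - 1) \<le> 3 * norm (Ps (Suc i) lam)" if G: "G lam" and i: "i \<in> {1..N-1}" for i lam
    unfolding Dl_def using Rb[OF G, of "Suc i"] i G unfolding G_def by (intro dl_bound) auto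
  have rec2: "R j lam = (Ps (Suc j) lam + R (Suc j) lam * Dl j lam) * E j lam"
    if G: "G lam" and j: "1 \<le> j" "j < N" for j lam
  proof -
    have kk: "j \<in> {1..N-1}" using j by auto
    have d: "R (Suc j) lam * Ps (Suc j) lam + 1 \<noteq> 0"
      using den_bound[of "R (Suc j) lam" "Ps (Suc j) lam"] Rb[OF G, of "Suc j"] kk G j unfolding G_def by force
    have "(R (Suc j) lam + Ps (Suc j) lam) / (R (Suc j) lam * Ps (Suc j) lam + 1)
        = Ps (Suc j) lam + R (Suc j) lam * Dl j lam"
      unfolding Dl_def using d by (simp add: field_simps power2_eq_square)
    then show ?thesis using recR[OF j, of lam] by (simp only:)
  qed
  have R1: "R 1 lam = (\<Sum>k=1..N-1. Ps (Suc k) lam * (\<Prod>i=1..k. E i lam) * (\<Prod>i=1..<k. Dl i lam))"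
    if G: "G lam" for lam
    using decomp[where R="\<lambda>j. R j lam" and P="\<lambda>j. Ps j lam" and E="\<lambda>j. E j lam" and D="\<lambda>j. Dl j lam" and N=N and j=1]
      RN rec2[OF G] assms(3) by simp
  have egam: "(\<Prod>i=1..k. E i lam) = exp (- gam \<omega> \<mu> \<sigma> h k lam * of_real lam)"
    if lam: "lam > 0" for k lam
  proof -
    have "- gam \<omega> \<mu> \<sigma> h k lam * of_real lam = (\<Sum>i=1..k. - (cc \<omega> \<mu> \<sigma> h i lam * of_real lam))"
      unfolding gam_def by (simp add: sum_distrib_right sum_negf)
    hence "exp (- gam \<omega> \<mu> \<sigma> h k lam * of_real lam) = (\<Prod>i=1..k. exp (- (cc \<omega> \<mu> \<sigma> h i lam * of_real lam)))"
      by (simp add: exp_sum)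
    also have "\<dots> = (\<Prod>i=1..k. E i lam)"
    proof (rule prod.cong)
      fix i assume i: "i \<in> {1..k}"
      have "u i lam = of_real lam * csqrt (1 + \<i> * of_real (a i / lam^2))"
        using i u_eq[of i lam] csqrt_scale[OF lam, of "a i"] by simp
      then show "exp (- (cc \<omega> \<mu> \<sigma> h i lam * of_real lam)) = E i lam"
        unfolding E_def cc_def a_def by (simp add: algebra_simps)
    qed simp
    finally show ?thesis by simp
  qed
  have eqn: "eventually (\<lambda>lam. Rref \<omega> \<mu> \<sigma> h N 1 lam =
        (\<Sum>k=1..N-1. (ksq \<omega> \<mu> \<sigma> (k+1) - ksq \<omega> \<mu> \<sigma> k) / (4 * of_real (lam^2))
           * (1 + eps k lam) * exp (- gam \<omega> \<mu> \<sigma> h k lam * of_real lam))) at_top"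
    using evG
  proof eventually_elim
    case (elim lam)
    have lam: "lam > 0" using elim unfolding G_def by simp
    have "Rref \<omega> \<mu> \<sigma> h N 1 lam = R 1 lam" unfolding R_def ..
    also have "\<dots> = (\<Sum>k=1..N-1. Ps (Suc k) lam * (\<Prod>i=1..k. E i lam) * (\<Prod>i=1..<k. Dl i lam))"
      by (rule R1[OF elim])
    also have "\<dots> = (\<Sum>k=1..N-1. (ksq \<omega> \<mu> \<sigma> (k+1) - ksq \<omega> \<mu> \<sigma> k) / (4 * of_real (lam^2))
           * (1 + eps k lam) * exp (- gam \<omega> \<mu> \<sigma> h k lam * of_real lam))"
    proof (rule sum.cong)
      fix k assume k: "k \<in> {1..N-1}"
      have l0: "(of_real lam :: complex) \<noteq> 0" using lam by simp
      show "Ps (Suc k) lam * (\<Prod>i=1..k. E i lam) * (\<Prod>i=1..<k. Dl i lam) =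
         (ksq \<omega> \<mu> \<sigma> (k+1) - ksq \<omega> \<mu> \<sigma> k) / (4 * of_real (lam^2))
           * (1 + eps k lam) * exp (- gam \<omega> \<mu> \<sigma> h k lam * of_real lam)"
        unfolding egam[OF lam, symmetric] pf(2)[OF k lam] eps_def P_def Del_def[symmetric]
        using l0 by (simp add: field_simps)
    qed simp
    finally show ?case .
  qed
  have sm: "small (eps k)" if k: "k \<in> {1..N-1}" for k
  proof -
    have sQ: "small (\<lambda>lam. 4 * of_real (lam^2) / (u k lam + u (Suc k) lam)^2 - 1)"
    proof (rule smallI[of _ "(a k + a (Suc k)) / 2"])
      show "eventually (\<lambda>lam. norm (4 * of_real (lam^2) / (u k lam + u (Suc k) lam)^2 - 1) \<le> (a k + a (Suc k)) / 2 / lam^2) at_top"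
        using eventually_gt_at_top[of "0::real"]
      proof eventually_elim
        case (elim lam)
        then show ?case using pf(3)[OF k elim] by simp
      qed
    qed
    have sD: "small (\<lambda>lam. Dl i lam - 1)" if i: "i \<in> {1..<k}" for i
    proof (rule smallI[of _ "3 * norm (Del i) / 4"])
      have i': "i \<in> {1..N-1}" using i k by auto
      show "eventually (\<lambda>lam. norm (Dl i lam - 1) \<le> 3 * norm (Del i) / 4 / lam^2) at_top"
        using evG
      proof eventually_elim
        case (elim lam)
        have lam: "lam > 0" using elim unfolding G_def by simp
        have "norm (Dl i lam - 1) \<le> 3 * norm (Ps (Suc i) lam)" by (rule Dl_b[OF elim i'])
        also have "\<dots> \<le> 3 * (norm (Del i) / (4 * lam^2))" using psi_bound[OF i' lam] by simp
        finally show ?case by simp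
      qed
    qed
    have sP: "small (\<lambda>lam. P k lam - 1)" unfolding P_def
      by (rule small_prod_set) (use sD in auto)
    have "small (\<lambda>lam. (4 * of_real (lam^2) / (u k lam + u (Suc k) lam)^2) * P k lam - 1)"
      by (rule small_prod1[OF sQ sP])
    then show ?thesis unfolding eps_def by simp
  qed
  show ?thesis
    by (rule exI[of _ eps]) (use sm small_bigo eqn in auto)
qed

end
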